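(* Let $G'$ be a connected graph and $x,v\in V(G')$ distinct vertices with $N_{G'}[x]\subseteq N_{G'}[v]$. If $T'$ is a search tree on $G'$ in which $v$ is a descendant of $x$, then $x$ has at most one child in $T'$ and $p(T',x)$ is a search tree on $G'-x$.
   Context: $N[\cdot]$ denotes the closed neighbourhood. For a connected graph $G$, a search tree on $G$ is a rooted tree with vertex set $V(G)$ defined recursively: its root is some vertex $r\in V(G)$, and the children of $r$ are the roots of search trees on the connected components of $G-r$. Elimination: for a rooted tree $T$ and a vertex $u$ with at most one child, $p(T,u)$ is the rooted tree obtained as follows: if $u$ is the root with child $c$, delete $u$ and make $c$ the root; if $u$ is not the root, has exactly one child $c$ and parent $b$, delete $u$ and add the edge $bc$ (root unchanged); if $u$ is a leaf, delete $u$ (root unchanged). *)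

theory Defs
  imports Main
begin

text \<open>Subgraphs G - x are
induced subgraphs, represented by the vertex set V - {x} with the same E.\<close>

definition graph :: "'a set \<Rightarrow> ('a \<Rightarrow> 'a \<Rightarrow> bool) \<Rightarrow> bool" where
  "graph V E \<longleftrightarrow> finite V \<and> (\<forall>u w. E u w \<longrightarrow> E w u)
     \<and> (\<forall>u. \<not> E u u) \<and> (\<forall>u w. E u w \<longrightarrow> u \<in> V \<and> w \<in> V)"

definition reach :: "'a set \<Rightarrow> ('a \<Rightarrow> 'a \<Rightarrow> bool) \<Rightarrow> 'a \<Rightarrow> 'a \<Rightarrow> bool" where
  "reach S E u w \<longleftrightarrow> u \<in> S \<and> (\<lambda>a b. a \<in> S \<and> b \<in> S \<and> E a b)\<^sup>*\<^sup>* u w"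

definition connected_graph :: "'a set \<Rightarrow> ('a \<Rightarrow> 'a \<Rightarrow> bool) \<Rightarrow> bool" where
  "connected_graph S E \<longleftrightarrow> S \<noteq> {} \<and> (\<forall>u\<in>S. \<forall>w\<in>S. reach S E u w)"

definition components :: "'a set \<Rightarrow> ('a \<Rightarrow> 'a \<Rightarrow> bool) \<Rightarrow> 'a set set" where
  "components S E = {C. \<exists>u\<in>S. C = {w. reach S E u w}}"

definition closed_nbhd :: "'a set \<Rightarrow> ('a \<Rightarrow> 'a \<Rightarrow> bool) \<Rightarrow> 'a \<Rightarrow> 'a set" where
  "closed_nbhd V E x = insert x {w \<in> V. E x w}"

text \<open>A rooted tree: (vertex set, root, parent function).  The parent of a
non-root vertex w is par w; the value par r at the root is irrelevant.\<close>
type_synonym 'a rtree = "'a set \<times> 'a \<times> ('a \<Rightarrow> 'a)"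

definition children :: "'a rtree \<Rightarrow> 'a \<Rightarrow> 'a set" where
  "children T u = (case T of (S, r, par) \<Rightarrow> {w \<in> S - {r}. par w = u})"

inductive descendant :: "'a rtree \<Rightarrow> 'a \<Rightarrow> 'a \<Rightarrow> bool" for T where
  child: "w \<in> children T u \<Longrightarrow> descendant T u w"
| step: "descendant T u w \<Longrightarrow> w' \<in> children T w \<Longrightarrow> descendant T u w'"

inductive search_tree :: "'a set \<Rightarrow> ('a \<Rightarrow> 'a \<Rightarrow> bool) \<Rightarrow> 'a rtree \<Rightarrow> bool" where
  "r \<in> S \<Longrightarrow> connected_graph S E \<Longrightarrow>
   (\<forall>C\<in>components (S - {r}) E. \<exists>c\<in>C. par c = r \<and> search_tree C E (C, c, par)) \<Longrightarrow>
   search_tree S E (S, r, par)"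

text \<open>Elimination p(T,u) for a vertex u with at most one child: delete u; if u is
the root, its unique child becomes the root; otherwise the child (if any) of u
gets u's parent as its new parent.\<close>
definition elim :: "'a rtree \<Rightarrow> 'a \<Rightarrow> 'a rtree" where
  "elim T u = (case T of (S, r, par) \<Rightarrow>
     (S - {u},
      if u = r then (THE c. c \<in> S - {r} \<and> par c = u) else r,
      \<lambda>w. if par w = u then par u else par w))"

end

theory Submission
  imports Defs
begin

definition edg :: "'a set \<Rightarrow> ('a \<Rightarrow> 'a \<Rightarrow> bool) \<Rightarrow> 'a \<Rightarrow> 'a \<Rightarrow> bool" where
  "edg S E a b \<longleftrightarrow> a \<in> S \<and> b \<in> S \<and> E a b"

lemma reach_alt: "reach S E u w \<longleftrightarrow> u \<in> S \<and> (edg S E)\<^sup>*\<^sup>* u w"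
proof -
  have "(\<lambda>a b. a \<in> S \<and> b \<in> S \<and> E a b) = edg S E" by (rule ext, rule ext) (simp add: edg_def)
  then show ?thesis unfolding reach_def by simp
qed

lemma edg_star_in: "(edg S E)\<^sup>*\<^sup>* u w \<Longrightarrow> w = u \<or> w \<in> S"
  by (induction rule: rtranclp_induct) (simp_all add: edg_def)

lemma reach_in: "reach S E u w \<Longrightarrow> u \<in> S \<and> w \<in> S"
proof -
  assume "reach S E u w"
  then have "u \<in> S" "(edg S E)\<^sup>*\<^sup>* u w" unfolding reach_alt by simp_all
  then show ?thesis using edg_star_in[of S E u w] by auto
qed

lemma reach_refl: "u \<in> S \<Longrightarrow> reach S E u u"
  unfolding reach_alt by simp

lemma reach_edge: "u \<in> S \<Longrightarrow> w \<in> S \<Longrightarrow> E u w \<Longrightarrow> reach S E u w"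
  unfolding reach_alt by (simp add: edg_def r_into_rtranclp)

lemma reach_trans: "reach S E u w \<Longrightarrow> reach S E w z \<Longrightarrow> reach S E u z"
  unfolding reach_alt using rtranclp_trans[of "edg S E" u w z] by simp

lemma reach_step: "reach S E u w \<Longrightarrow> edg S E w z \<Longrightarrow> reach S E u z"
  unfolding reach_alt using rtranclp.rtrancl_into_rtrancl[of "edg S E" u w z] by simp

lemma reach_sym:
  assumes sym: "\<forall>a b. E a b \<longrightarrow> E b a" and r: "reach S E u w" shows "reach S E w u"
proof -
  have "(edg S E)\<^sup>*\<^sup>* u w" using r unfolding reach_alt by simp
  then have "(edg S E)\<^sup>*\<^sup>* w u"
  proof (induction rule: rtranclp_induct)
    case base then show ?case by simp
  next
    case (step y z)
    have "edg S E z y" using step(2) sym unfolding edg_def by blast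
    then show ?case using step(3) by (rule converse_rtranclp_into_rtranclp)
  qed
  then show ?thesis using reach_in[OF r] unfolding reach_alt by simp
qed

lemma reach_mono:
  assumes "A \<subseteq> B" "reach A E u w" shows "reach B E u w"
proof -
  have "(edg A E)\<^sup>*\<^sup>* u w" using assms(2) unfolding reach_alt by simp
  then have "(edg B E)\<^sup>*\<^sup>* u w"
  proof (induction rule: rtranclp_induct)
    case base then show ?case by simp
  next
    case (step y z)
    have "edg B E y z" using step(2) assms(1) unfolding edg_def by blast
    with step(3) show ?case by (rule rtranclp.rtrancl_into_rtrancl)
  qed
  then show ?thesis using reach_in[OF assms(2)] assms(1) unfolding reach_alt by blast
qed

lemma reach_avoid:
  assumes "reach A E u w" "\<not> reach A E u x" shows "reach (A - {x}) E u w"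
proof -
  have uA: "u \<in> A" using reach_in[OF assms(1)] by simp
  have "(edg A E)\<^sup>*\<^sup>* u w" using assms(1) unfolding reach_alt by simp
  then show ?thesis
  proof (induction rule: rtranclp_induct)
    case base
    have "reach A E u u" using uA by (rule reach_refl)
    then have "u \<noteq> x" using assms(2) by auto
    then have "u \<in> A - {x}" using uA by simp
    then show ?case by (rule reach_refl)
  next
    case (step y z)
    have rz: "reach A E u z" using step(1,2) uA rtranclp.rtrancl_into_rtrancl[of "edg A E" u y z] unfolding reach_alt by simp
    have "z \<noteq> x" using rz assms(2) by auto
    have "reach A E u y" using step(1) uA unfolding reach_alt by simp
    then have "y \<noteq> x" using assms(2) by auto
    with \<open>z \<noteq> x\<close> have "edg (A - {x}) E y z" using step(2) unfolding edg_def by blast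
    with step(3) show ?case by (rule reach_step)
  qed
qed

lemma conn_remove:
  assumes sym: "\<forall>a b. E a b \<longrightarrow> E b a" and c: "connected_graph S E"
    and xS: "x \<in> S" and vS: "v \<in> S" and xv: "x \<noteq> v" and N: "\<forall>y. E x y \<longrightarrow> y = v \<or> E v y"
  shows "connected_graph (S - {x}) E"
proof -
  have vS': "v \<in> S - {x}" using vS xv by simp
  have key: "reach (S - {x}) E v w" if wS: "w \<in> S" and wx: "w \<noteq> x" for w
  proof -
    have "reach S E v w" using c vS wS unfolding connected_graph_def by simp
    then have "(edg S E)\<^sup>*\<^sup>* v w" unfolding reach_alt by simp
    then show ?thesis using wx
    proof (induction rule: rtranclp_induct)
      case base show ?case by (rule reach_refl[OF vS'])
    next
      case (step y z)
      have yz: "y \<in> S" "z \<in> S" "E y z" using step(2) unfolding edg_def by simp_all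
      show ?case
      proof (cases "y = x")
        case True
        then have "z = v \<or> E v z" using N yz(3) by simp
        then show ?thesis
        proof
          assume "z = v" then show ?thesis using reach_refl[OF vS'] by simp
        next
          assume "E v z" then show ?thesis using vS' yz(2) step(4) by (intro reach_edge) simp_all
        qed
      next
        case False
        then have "reach (S - {x}) E v y" using step(3) by simp
        moreover have "edg (S - {x}) E y z" using yz False step(4) unfolding edg_def by simp
        ultimately show ?thesis by (rule reach_step)
      qed
    qed
  qed
  show ?thesis unfolding connected_graph_def
  proof (intro conjI ballI)
    show "S - {x} \<noteq> {}" using vS' by blast
  next
    fix u w assume u: "u \<in> S - {x}" and w: "w \<in> S - {x}"
    have "reach (S - {x}) E v u" using key u by simp
    then have "reach (S - {x}) E u v" by (rule reach_sym[OF sym])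
    moreover have "reach (S - {x}) E v w" using key w by simp
    ultimately show "reach (S - {x}) E u w" by (rule reach_trans)
  qed
qed

lemma comp_eq:
  assumes sym: "\<forall>a b. E a b \<longrightarrow> E b a" and C: "C \<in> components S E" and wC: "w \<in> C"
  shows "C = {z. reach S E w z}"
proof -
  obtain u where u: "u \<in> S" "C = {z. reach S E u z}" using C unfolding components_def by blast
  then have uw: "reach S E u w" using wC by simp
  then have wu: "reach S E w u" by (rule reach_sym[OF sym])
  show ?thesis
  proof (intro set_eqI iffI)
    fix z assume "z \<in> C" then have "reach S E u z" using u by simp
    with wu have "reach S E w z" by (rule reach_trans)
    then show "z \<in> {z. reach S E w z}" by simp
  next
    fix z assume "z \<in> {z. reach S E w z}" then have "reach S E w z" by simp
    with uw have "reach S E u z" by (rule reach_trans)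
    then show "z \<in> C" using u by simp
  qed
qed

lemma comp_sub: assumes "C \<in> components S E" shows "C \<subseteq> S"
proof
  fix z assume z: "z \<in> C"
  obtain u where u: "u \<in> S" "C = {z. reach S E u z}" using assms unfolding components_def by blast
  then have "reach S E u z" using z by simp
  then have "u \<in> S \<and> z \<in> S" by (rule reach_in)
  then show "z \<in> S" by simp
qed

lemma comp_mem: "u \<in> S \<Longrightarrow> {z. reach S E u z} \<in> components S E"
  unfolding components_def by auto

lemma comp_self: "u \<in> S \<Longrightarrow> u \<in> {z. reach S E u z}"
  using reach_refl by simp

lemma st_inv:
  assumes "search_tree S E (S', r, par)"
  shows "S' = S \<and> r \<in> S \<and> connected_graph S E \<and>
    (\<forall>C\<in>components (S - {r}) E. \<exists>c\<in>C. par c = r \<and> search_tree C E (C, c, par))"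
  using assms by (cases rule: search_tree.cases) simp

lemma par_in_gen:
  assumes "search_tree S E T"
  shows "\<forall>w \<in> S - {fst (snd T)}. snd (snd T) w \<in> S"
  using assms
proof (induction rule: search_tree.induct)
  case (1 r S E par)
  show ?case
  proof
    fix w assume w: "w \<in> S - {fst (snd (S, r, par))}"
    then have wS: "w \<in> S - {r}" by simp
    let ?C = "{z. reach (S - {r}) E w z}"
    have C: "?C \<in> components (S - {r}) E" by (rule comp_mem[OF wS])
    have wC: "w \<in> ?C" by (rule comp_self[OF wS])
    have CS: "?C \<subseteq> S - {r}" by (rule comp_sub[OF C])
    have "\<exists>c\<in>?C. par c = r \<and> search_tree ?C E (?C, c, par) \<and>
        (\<forall>w\<in>?C - {fst (snd (?C, c, par))}. snd (snd (?C, c, par)) w \<in> ?C)"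
      by (rule bspec[OF 1(3) C])
    then obtain c where c: "c \<in> ?C" "par c = r" "\<forall>w\<in>?C - {c}. par w \<in> ?C" by auto
    show "snd (snd (S, r, par)) w \<in> S"
    proof (cases "w = c")
      case True then show ?thesis using c(2) 1(1) by simp
    next
      case False then have "par w \<in> ?C" using c(3) wC by simp
      then show ?thesis using CS by auto
    qed
  qed
qed

lemma par_in:
  assumes "search_tree S E (S, r, par)" "w \<in> S - {r}" shows "par w \<in> S"
  using par_in_gen[OF assms(1)] assms(2) by simp

lemma agree_gen:
  assumes "search_tree S E T"
  shows "\<forall>par'. (\<forall>w\<in>S - {fst (snd T)}. par' w = snd (snd T) w) \<longrightarrow> search_tree S E (S, fst (snd T), par')"
  using assms
proof (induction rule: search_tree.induct)
  case (1 r S E par)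
  show ?case
  proof (intro allI impI)
    fix par' assume ag: "\<forall>w\<in>S - {fst (snd (S, r, par))}. par' w = snd (snd (S, r, par)) w"
    then have ag': "\<forall>w\<in>S - {r}. par' w = par w" by simp
    have "search_tree S E (S, r, par')"
    proof (rule search_tree.intros)
      show "r \<in> S" by (rule 1(1))
      show "connected_graph S E" by (rule 1(2))
      show "\<forall>C\<in>components (S - {r}) E. \<exists>c\<in>C. par' c = r \<and> search_tree C E (C, c, par')"
      proof
        fix C assume C: "C \<in> components (S - {r}) E"
        have CS: "C \<subseteq> S - {r}" by (rule comp_sub[OF C])
        have "\<exists>c\<in>C. par c = r \<and> search_tree C E (C, c, par) \<and>
          (\<forall>par'. (\<forall>w\<in>C - {fst (snd (C, c, par))}. par' w = snd (snd (C, c, par)) w) \<longrightarrow>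
             search_tree C E (C, fst (snd (C, c, par)), par'))"
          by (rule bspec[OF 1(3) C])
        then obtain c where c: "c \<in> C" "par c = r"
          "\<forall>par'. (\<forall>w\<in>C - {c}. par' w = par w) \<longrightarrow> search_tree C E (C, c, par')" by auto
        have "par' c = r" using c(1,2) CS ag' by auto
        moreover have "search_tree C E (C, c, par')" using c(3) CS ag' by blast
        ultimately show "\<exists>c\<in>C. par' c = r \<and> search_tree C E (C, c, par')" using c(1) by blast
      qed
    qed
    then show "search_tree S E (S, fst (snd (S, r, par)), par')" by simp
  qed
qed

lemma agree:
  assumes "search_tree S E (S, r, par)" "\<forall>w\<in>S - {r}. par' w = par w"
  shows "search_tree S E (S, r, par')"
  using agree_gen[OF assms(1)] assms(2) by simp

lemma children_simp: "children (S, r, par) u = {w \<in> S - {r}. par w = u}"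
  unfolding children_def by simp

lemma children_sub:
  assumes st: "search_tree S E (S, r, par)" and sym: "\<forall>a b. E a b \<longrightarrow> E b a"
    and C: "C \<in> components (S - {r}) E" and cC: "c \<in> C" and pc: "par c = r"
    and stC: "search_tree C E (C, c, par)" and uC: "u \<in> C"
  shows "children (S, r, par) u = children (C, c, par) u"
proof (intro set_eqI iffI)
  have CS: "C \<subseteq> S - {r}" by (rule comp_sub[OF C])
  have ur: "u \<noteq> r" using uC CS by auto
  fix w
  assume w: "w \<in> children (S, r, par) u"
  then have wS: "w \<in> S - {r}" and pw: "par w = u" by (simp_all add: children_simp)
  let ?D = "{z. reach (S - {r}) E w z}"
  have D: "?D \<in> components (S - {r}) E" by (rule comp_mem[OF wS])
  have wD: "w \<in> ?D" by (rule comp_self[OF wS])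
  have "\<exists>d\<in>?D. par d = r \<and> search_tree ?D E (?D, d, par)"
    using st_inv[OF st] D by blast
  then obtain d where d: "d \<in> ?D" "par d = r" "search_tree ?D E (?D, d, par)" by blast
  have "w \<noteq> d" using d(2) pw ur by auto
  then have "par w \<in> ?D" using par_in[OF d(3)] wD by simp
  then have uD: "u \<in> ?D" using pw by simp
  have "?D = {z. reach (S - {r}) E u z}" by (rule comp_eq[OF sym D uD])
  also have "\<dots> = C" by (rule comp_eq[OF sym C uC, symmetric])
  finally have "w \<in> C" using wD by simp
  moreover have "w \<noteq> c" using pc pw ur by auto
  ultimately show "w \<in> children (C, c, par) u" using pw by (simp add: children_simp)
next
  have CS: "C \<subseteq> S - {r}" by (rule comp_sub[OF C])
  fix w
  assume "w \<in> children (C, c, par) u"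
  then show "w \<in> children (S, r, par) u" using CS by (auto simp add: children_simp)
qed

lemma desc_sub:
  assumes st: "search_tree S E (S, r, par)" and sym: "\<forall>a b. E a b \<longrightarrow> E b a"
    and C: "C \<in> components (S - {r}) E" and cC: "c \<in> C" and pc: "par c = r"
    and stC: "search_tree C E (C, c, par)"
    and d: "descendant (S, r, par) u w" and uC: "u \<in> C"
  shows "descendant (C, c, par) u w \<and> w \<in> C"
  using d uC
proof (induction rule: descendant.induct)
  case (child w u)
  then have "w \<in> children (C, c, par) u" using children_sub[OF st sym C cC pc stC] by simp
  then show ?case by (auto simp add: children_simp intro: descendant.child)
next
  case (step u w w')
  then have IH: "descendant (C, c, par) u w" "w \<in> C" by simp_all
  have "w' \<in> children (S, r, par) w" using step.hyps by blast
  then have "w' \<in> children (C, c, par) w" using IH(2) children_sub[OF st sym C cC pc stC] by simp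
  then show ?case using IH(1) by (auto simp add: children_simp intro: descendant.step)
qed

lemma desc_nonroot: "descendant (S, r, par) u w \<Longrightarrow> w \<in> S - {r}"
  by (induction rule: descendant.induct) (simp_all add: children_simp)

lemma root_case:
  assumes st: "search_tree S E (S, r, par)" and sym: "\<forall>a b. E a b \<longrightarrow> E b a"
    and vS: "v \<in> S - {r}" and N: "\<forall>y. E r y \<longrightarrow> y = v \<or> E v y"
  shows "\<exists>c. c \<in> S - {r} \<and> par c = r \<and> children (S, r, par) r = {c} \<and>
     search_tree (S - {r}) E (S - {r}, c, par)"
proof -
  have inv: "r \<in> S" "connected_graph S E"
    "\<forall>C\<in>components (S - {r}) E. \<exists>c\<in>C. par c = r \<and> search_tree C E (C, c, par)"
    using st_inv[OF st] by simp_all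
  have vr: "r \<noteq> v" using vS by auto
  have conn: "connected_graph (S - {r}) E"
    using conn_remove[OF sym inv(2) inv(1) _ vr N] vS by simp
  let ?C = "{z. reach (S - {r}) E v z}"
  have C: "?C \<in> components (S - {r}) E" by (rule comp_mem[OF vS])
  have CS: "?C \<subseteq> S - {r}" by (rule comp_sub[OF C])
  have "S - {r} \<subseteq> ?C"
  proof
    fix z assume "z \<in> S - {r}"
    then have "reach (S - {r}) E v z" using conn vS unfolding connected_graph_def by simp
    then show "z \<in> ?C" by simp
  qed
  with CS have Ceq: "?C = S - {r}" by (rule equalityI)
  have "\<exists>c\<in>?C. par c = r \<and> search_tree ?C E (?C, c, par)" by (rule bspec[OF inv(3) C])
  then obtain c where c: "c \<in> S - {r}" "par c = r" "search_tree (S - {r}) E (S - {r}, c, par)"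
    unfolding Ceq by blast
  have "children (S, r, par) r = {c}"
  proof (intro set_eqI iffI)
    fix w assume w: "w \<in> children (S, r, par) r"
    then have wS: "w \<in> S - {r}" and pw: "par w = r" by (simp_all add: children_simp)
    show "w \<in> {c}"
    proof (rule ccontr)
      assume "w \<notin> {c}"
      then have "w \<in> (S - {r}) - {c}" using wS by simp
      then have "par w \<in> S - {r}" by (rule par_in[OF c(3)])
      then show False using pw by simp
    qed
  next
    fix w assume "w \<in> {c}"
    then show "w \<in> children (S, r, par) r" using c by (simp add: children_simp)
  qed
  then show ?thesis using c by blast
qed

lemma comp_split:
  assumes sym: "\<forall>a b. E a b \<longrightarrow> E b a" and C0: "C0 \<in> components A E" and xC0: "x \<in> C0"
    and conn: "connected_graph (C0 - {x}) E" and C': "C' \<in> components (A - {x}) E"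
  shows "C' = C0 - {x} \<or> (C' \<in> components A E \<and> x \<notin> C')"
proof -
  obtain u where u: "u \<in> A - {x}" "C' = {z. reach (A - {x}) E u z}"
    using C' unfolding components_def by blast
  have uA: "u \<in> A" using u(1) by simp
  let ?C = "{z. reach A E u z}"
  have C: "?C \<in> components A E" by (rule comp_mem[OF uA])
  have C'sub: "C' \<subseteq> ?C"
  proof
    fix z assume "z \<in> C'"
    then have "reach (A - {x}) E u z" using u(2) by simp
    then have "reach A E u z" by (rule reach_mono[rotated]) auto
    then show "z \<in> ?C" by simp
  qed
  show ?thesis
  proof (cases "reach A E u x")
    case True
    then have xC: "x \<in> ?C" by simp
    have "?C = {z. reach A E x z}" by (rule comp_eq[OF sym C xC])
    also have "\<dots> = C0" by (rule comp_eq[OF sym C0 xC0, symmetric])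
    finally have CC0: "?C = C0" .
    have C0A: "C0 - {x} \<subseteq> A - {x}" using comp_sub[OF C0] by auto
    have "C' = C0 - {x}"
    proof (intro set_eqI iffI)
      fix z assume z: "z \<in> C'"
      then have "reach (A - {x}) E u z" using u(2) by simp
      then have "u \<in> A - {x} \<and> z \<in> A - {x}" by (rule reach_in)
      then have "z \<in> A - {x}" by simp
      then show "z \<in> C0 - {x}" using C'sub z CC0 by auto
    next
      fix z assume z: "z \<in> C0 - {x}"
      have "u \<in> C0 - {x}" using comp_self[OF uA, of E] CC0 u(1) by auto
      then have "reach (C0 - {x}) E u z" using conn z unfolding connected_graph_def by simp
      then have "reach (A - {x}) E u z" by (rule reach_mono[OF C0A])
      then show "z \<in> C'" using u(2) by simp
    qed
    then show ?thesis by simp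
  next
    case False
    have "?C \<subseteq> C'"
    proof
      fix z assume "z \<in> ?C"
      then have "reach A E u z" by simp
      then have "reach (A - {x}) E u z" using False by (rule reach_avoid)
      then show "z \<in> C'" using u(2) by simp
    qed
    with C'sub have "C' = ?C" by (rule equalityI)
    then show ?thesis using C False by simp
  qed
qed

lemma main_gen:
  assumes "search_tree S E T"
  shows "(\<forall>a b. E a b \<longrightarrow> E b a) \<longrightarrow> x \<in> S \<longrightarrow> x \<noteq> v \<longrightarrow> (\<forall>y. E x y \<longrightarrow> y = v \<or> E v y)
    \<longrightarrow> descendant T x v \<longrightarrow> (\<exists>d. children T x \<subseteq> {d}) \<and> search_tree (S - {x}) E (elim T x)"
  using assms
proof (induction rule: search_tree.induct)
  case (1 r S E par)
  have st: "search_tree S E (S, r, par)"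
  proof (rule search_tree.intros[OF 1(1) 1(2)])
    show "\<forall>C\<in>components (S - {r}) E. \<exists>c\<in>C. par c = r \<and> search_tree C E (C, c, par)"
    proof
      fix C assume "C \<in> components (S - {r}) E"
      then obtain c where "c \<in> C" "par c = r" "search_tree C E (C, c, par)" using 1(3) by blast
      then show "\<exists>c\<in>C. par c = r \<and> search_tree C E (C, c, par)" by blast
    qed
  qed
  show ?case
  proof (intro impI)
    assume sym: "\<forall>a b. E a b \<longrightarrow> E b a" and xS: "x \<in> S" and xv: "x \<noteq> v"
      and N: "\<forall>y. E x y \<longrightarrow> y = v \<or> E v y" and desc: "descendant (S, r, par) x v"
    define pe where "pe = (\<lambda>w. if par w = x then par x else par w)"
    have elim_eq: "elim (S, r, par) x =
      (S - {x}, if x = r then (THE c. c \<in> S - {r} \<and> par c = x) else r, pe)"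
      by (simp add: elim_def pe_def)
    have vS: "v \<in> S - {r}" using desc by (rule desc_nonroot)
    show "(\<exists>d. children (S, r, par) x \<subseteq> {d}) \<and> search_tree (S - {x}) E (elim (S, r, par) x)"
    proof (cases "x = r")
      case True
      have Nr: "\<forall>y. E r y \<longrightarrow> y = v \<or> E v y" using N True by simp
      obtain c where c: "c \<in> S - {r}" "par c = r" "children (S, r, par) r = {c}"
        "search_tree (S - {r}) E (S - {r}, c, par)"
        using root_case[OF st sym vS Nr] by blast
      have the: "(THE c'. c' \<in> S - {r} \<and> par c' = x) = c"
      proof (rule the_equality)
        show "c \<in> S - {r} \<and> par c = x" using c True by simp
      next
        fix c' assume "c' \<in> S - {r} \<and> par c' = x"
        then have "c' \<in> children (S, r, par) r" using True by (simp add: children_simp)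
        then show "c' = c" using c(3) by simp
      qed
      have "search_tree (S - {r}) E (S - {r}, c, pe)"
      proof (rule agree[OF c(4)])
        show "\<forall>w\<in>S - {r} - {c}. pe w = par w"
        proof
          fix w assume w: "w \<in> S - {r} - {c}"
          have "par w \<noteq> x"
          proof
            assume "par w = x"
            then have "w \<in> children (S, r, par) r" using w True by (simp add: children_simp)
            then show False using w c(3) by simp
          qed
          then show "pe w = par w" by (simp add: pe_def)
        qed
      qed
      then have "search_tree (S - {x}) E (elim (S, r, par) x)" using elim_eq the True by simp
      moreover have "children (S, r, par) x \<subseteq> {c}" using c(3) True by simp
      ultimately show ?thesis by blast
    next
      case False
      have xS': "x \<in> S - {r}" using xS False by simp
      let ?C0 = "{z. reach (S - {r}) E x z}"
      have C0: "?C0 \<in> components (S - {r}) E" by (rule comp_mem[OF xS'])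
      have xC0: "x \<in> ?C0" by (rule comp_self[OF xS'])
      have C0S: "?C0 \<subseteq> S - {r}" by (rule comp_sub[OF C0])
      obtain c0 where c0: "c0 \<in> ?C0" "par c0 = r" "search_tree ?C0 E (?C0, c0, par)"
        and IH0: "(\<forall>a b. E a b \<longrightarrow> E b a) \<longrightarrow> x \<in> ?C0 \<longrightarrow> x \<noteq> v \<longrightarrow> (\<forall>y. E x y \<longrightarrow> y = v \<or> E v y)
          \<longrightarrow> descendant (?C0, c0, par) x v \<longrightarrow> (\<exists>d. children (?C0, c0, par) x \<subseteq> {d}) \<and>
             search_tree (?C0 - {x}) E (elim (?C0, c0, par) x)"
        using bspec[OF 1(3) C0] by blast
      have dC: "descendant (?C0, c0, par) x v \<and> v \<in> ?C0"
        by (rule desc_sub[OF st sym C0 c0(1) c0(2) c0(3) desc xC0])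
      have IH: "(\<exists>d. children (?C0, c0, par) x \<subseteq> {d}) \<and> search_tree (?C0 - {x}) E (elim (?C0, c0, par) x)"
        using IH0 sym xC0 xv N dC by simp
      have ch: "children (S, r, par) x = children (?C0, c0, par) x"
        by (rule children_sub[OF st sym C0 c0(1) c0(2) c0(3) xC0])
      define r0 where "r0 = (if x = c0 then (THE c. c \<in> ?C0 - {c0} \<and> par c = x) else c0)"
      have elim0: "elim (?C0, c0, par) x = (?C0 - {x}, r0, pe)"
        by (simp add: elim_def pe_def r0_def)
      have stR: "search_tree (?C0 - {x}) E (?C0 - {x}, r0, pe)" using IH elim0 by simp
      have vC0: "v \<in> ?C0" using dC by simp
      have r0: "r0 \<in> ?C0 - {x} \<and> pe r0 = r"
      proof (cases "x = c0")
        case True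
        have vC0': "v \<in> ?C0 - {c0}" using vC0 xv True by simp
        have Nc: "\<forall>y. E c0 y \<longrightarrow> y = v \<or> E v y" using N True by simp
        obtain c1 where c1: "c1 \<in> ?C0 - {c0}" "par c1 = c0" "children (?C0, c0, par) c0 = {c1}"
          using root_case[OF c0(3) sym vC0' Nc] by blast
        have the: "(THE c. c \<in> ?C0 - {c0} \<and> par c = x) = c1"
        proof (rule the_equality)
          show "c1 \<in> ?C0 - {c0} \<and> par c1 = x" using c1 True by simp
        next
          fix c' assume "c' \<in> ?C0 - {c0} \<and> par c' = x"
          then have "c' \<in> children (?C0, c0, par) c0" using True by (simp add: children_simp)
          then show "c' = c1" using c1(3) by simp
        qed
        have "r0 = c1" using the True by (simp add: r0_def)
        then show ?thesis using c1 True c0(2) by (simp add: pe_def)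
      next
        case False
        then have "r0 = c0" by (simp add: r0_def)
        then show ?thesis using False c0(1,2) \<open>x \<noteq> r\<close> by (simp add: pe_def)
      qed
      have invS: "connected_graph S E" using st_inv[OF st] by simp
      have vS2: "v \<in> S" using vS by simp
      have conn: "connected_graph (S - {x}) E" by (rule conn_remove[OF sym invS xS vS2 xv N])
      have connC0: "connected_graph ?C0 E" using st_inv[OF c0(3)] by simp
      have connC0': "connected_graph (?C0 - {x}) E" by (rule conn_remove[OF sym connC0 xC0 vC0 xv N])
      have "search_tree (S - {x}) E (S - {x}, r, pe)"
      proof (rule search_tree.intros)
        show "r \<in> S - {x}" using 1(1) False by simp
        show "connected_graph (S - {x}) E" by (rule conn)
        show "\<forall>C'\<in>components (S - {x} - {r}) E. \<exists>c\<in>C'. pe c = r \<and> search_tree C' E (C', c, pe)"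
        proof
          fix C' assume C'0: "C' \<in> components (S - {x} - {r}) E"
          have "S - {x} - {r} = (S - {r}) - {x}" by auto
          then have C': "C' \<in> components ((S - {r}) - {x}) E" using C'0 by simp
          have "C' = ?C0 - {x} \<or> (C' \<in> components (S - {r}) E \<and> x \<notin> C')"
            by (rule comp_split[OF sym C0 xC0 connC0' C'])
          then show "\<exists>c\<in>C'. pe c = r \<and> search_tree C' E (C', c, pe)"
          proof
            assume "C' = ?C0 - {x}"
            then show ?thesis using r0 stR by blast
          next
            assume a: "C' \<in> components (S - {r}) E \<and> x \<notin> C'"
            have CS: "C' \<subseteq> S - {r}" using comp_sub a by blast
            obtain c where c: "c \<in> C'" "par c = r" "search_tree C' E (C', c, par)"
              using st_inv[OF st] a by blast
            have "pe c = r" using c(2) \<open>x \<noteq> r\<close> by (simp add: pe_def)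
            moreover have "search_tree C' E (C', c, pe)"
            proof (rule agree[OF c(3)])
              show "\<forall>w\<in>C' - {c}. pe w = par w"
              proof
                fix w assume w: "w \<in> C' - {c}"
                have "par w \<in> C'" by (rule par_in[OF c(3) w])
                then have "par w \<noteq> x" using a by auto
                then show "pe w = par w" by (simp add: pe_def)
              qed
            qed
            ultimately show ?thesis using c(1) by blast
          qed
        qed
      qed
      moreover have "elim (S, r, par) x = (S - {x}, r, pe)" using elim_eq False by simp
      ultimately have "search_tree (S - {x}) E (elim (S, r, par) x)" by simp
      moreover have "\<exists>d. children (S, r, par) x \<subseteq> {d}" using IH ch by simp
      ultimately show ?thesis by blast
    qed
  qed
qed

theorem lemma2p1:
  fixes V :: "'a set" and E :: "'a \<Rightarrow> 'a \<Rightarrow> bool" and x v :: 'a and T :: "'a rtree"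
  assumes "graph V E" and "connected_graph V E"
    and "x \<in> V" and "v \<in> V" and "x \<noteq> v"
    and "closed_nbhd V E x \<subseteq> closed_nbhd V E v"
    and "search_tree V E T"
    and "descendant T x v"
  shows "card (children T x) \<le> 1 \<and> search_tree (V - {x}) E (elim T x)"
proof -
  have sym: "\<forall>a b. E a b \<longrightarrow> E b a" and inV: "\<forall>u w. E u w \<longrightarrow> u \<in> V \<and> w \<in> V"
    using assms(1) unfolding graph_def by simp_all
  have N: "\<forall>y. E x y \<longrightarrow> y = v \<or> E v y"
  proof (intro allI impI)
    fix y assume e: "E x y"
    then have "y \<in> closed_nbhd V E x" using inV unfolding closed_nbhd_def by simp
    then have "y \<in> closed_nbhd V E v" using assms(6) by blast
    then show "y = v \<or> E v y" unfolding closed_nbhd_def by auto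
  qed
  have res: "(\<exists>d. children T x \<subseteq> {d}) \<and> search_tree (V - {x}) E (elim T x)"
    using main_gen[OF assms(7)] sym assms(3) assms(5) N assms(8) by simp
  then obtain d where d: "children T x \<subseteq> {d}" by blast
  have "card (children T x) \<le> card {d}" using d by (intro card_mono) simp_all
  then show ?thesis using res by simp
qed

end
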